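(* Let $z_1,z_2,z_3,z_4\in\mathbb{C}$ be the vertices of a convex quadrilateral, labelled in cyclic order around its boundary, and for $j=1,\dots,4$ (indices mod $4$) let $$\alpha_j=\angle z_{j+1}z_jz_{j+2},\qquad \beta_j=\angle z_{j+2}z_jz_{j-1},\qquad \gamma_j=\angle z_{j-1}z_jz_{j+1}.$$ Define $$S_1=\sum_{j=1}^4(\cos\alpha_j+\cos\beta_j+\cos\gamma_j),\qquad S_2=\sum_{j=1}^4(\cos\alpha_j+\cos\beta_j+\cos\gamma_j)(\cos\alpha_{j+1}+\cos\gamma_{j+2}+\cos\beta_{j+3}).$$ Then $8S_1+2S_2\ge 40$.
   Context: Angles $\angle XYZ\in[0,\pi]$ denote the usual unsigned angle at $Y$ between the segments $YX$ and $YZ$. *)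

theory Defs
  imports "HOL-Analysis.Analysis"
begin

definition ang :: "complex \<Rightarrow> complex \<Rightarrow> complex \<Rightarrow> real" where
  "ang X Y Z = arccos (inner (X - Y) (Z - Y) / (norm (X - Y) * norm (Z - Y)))"

text \<open>Cross product (signed area) of two plane vectors.\<close>
definition cross2 :: "complex \<Rightarrow> complex \<Rightarrow> real" where
  "cross2 a b = Im (cnj a * b)"

definition convex_quad :: "(nat \<Rightarrow> complex) \<Rightarrow> bool" where
  "convex_quad z \<longleftrightarrow>
     (\<forall>j<4. cross2 (z ((j+1) mod 4) - z (j mod 4)) (z ((j+2) mod 4) - z ((j+1) mod 4)) > 0) \<or>
     (\<forall>j<4. cross2 (z ((j+1) mod 4) - z (j mod 4)) (z ((j+2) mod 4) - z ((j+1) mod 4)) < 0)"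

definition qalpha :: "(nat \<Rightarrow> complex) \<Rightarrow> nat \<Rightarrow> real" where
  "qalpha z j = ang (z ((j+1) mod 4)) (z (j mod 4)) (z ((j+2) mod 4))"

definition qbeta :: "(nat \<Rightarrow> complex) \<Rightarrow> nat \<Rightarrow> real" where
  "qbeta z j = ang (z ((j+2) mod 4)) (z (j mod 4)) (z ((j+3) mod 4))"

definition qgamma :: "(nat \<Rightarrow> complex) \<Rightarrow> nat \<Rightarrow> real" where
  "qgamma z j = ang (z ((j+3) mod 4)) (z (j mod 4)) (z ((j+1) mod 4))"

end

theory Submission
  imports Defs
begin

lemma cos_ang:
  assumes "A \<noteq> B" "C \<noteq> B"
  shows "cos (ang A B C) = inner (A - B) (C - B) / (norm (A - B) * norm (C - B))"
proof -
  have "\<bar>inner (A - B) (C - B)\<bar> \<le> norm (A - B) * norm (C - B)"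
    by (rule Cauchy_Schwarz_ineq2)
  moreover have "norm (A - B) * norm (C - B) > 0" using assms by simp
  ultimately have "\<bar>inner (A - B) (C - B) / (norm (A - B) * norm (C - B))\<bar> \<le> 1"
    by (simp add: abs_divide)
  then show ?thesis unfolding ang_def by (rule cos_arccos_abs)
qed

lemma alg:
  fixes a b c :: real
  assumes "a > 0" "b > 0" "c > 0" "a \<le> b + c" "b \<le> a + c" "c \<le> a + b"
  shows "(b^2 + c^2 - a^2) / (2*b*c) + (a^2 + c^2 - b^2) / (2*a*c) + (a^2 + b^2 - c^2) / (2*a*b) \<ge> 1"
proof -
  have d1: "(b^2 + c^2 - a^2) / (2*b*c) = a*(b^2 + c^2 - a^2) / (2*a*b*c)" using assms by simp
  have d2: "(a^2 + c^2 - b^2) / (2*a*c) = b*(a^2 + c^2 - b^2) / (2*a*b*c)" using assms by simp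
  have d3: "(a^2 + b^2 - c^2) / (2*a*b) = c*(a^2 + b^2 - c^2) / (2*a*b*c)" using assms by simp
  have n: "a*(b^2 + c^2 - a^2) + b*(a^2 + c^2 - b^2) + c*(a^2 + b^2 - c^2)
      = 2*a*b*c + (a+b-c)*(b+c-a)*(c+a-b)" by algebra
  have e: "(b^2 + c^2 - a^2) / (2*b*c) + (a^2 + c^2 - b^2) / (2*a*c) + (a^2 + b^2 - c^2) / (2*a*b)
     = 1 + ((a+b-c)*(b+c-a)*(c+a-b)) / (2*a*b*c)"
  proof -
    have "a*(b^2 + c^2 - a^2) / (2*a*b*c) + b*(a^2 + c^2 - b^2) / (2*a*b*c) + c*(a^2 + b^2 - c^2) / (2*a*b*c)
       = (a*(b^2 + c^2 - a^2) + b*(a^2 + c^2 - b^2) + c*(a^2 + b^2 - c^2)) / (2*a*b*c)"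
      by (simp only: add_divide_distrib)
    also have "\<dots> = (2*a*b*c + (a+b-c)*(b+c-a)*(c+a-b)) / (2*a*b*c)" by (simp only: n)
    also have "\<dots> = (2*a*b*c) / (2*a*b*c) + ((a+b-c)*(b+c-a)*(c+a-b)) / (2*a*b*c)"
      by (simp only: add_divide_distrib)
    also have "(2*a*b*c) / (2*a*b*c) = 1" using assms by simp
    finally show ?thesis by (simp only: d1 d2 d3)
  qed
  have "(a+b-c)*(b+c-a)*(c+a-b) \<ge> 0" using assms by (intro mult_nonneg_nonneg) auto
  then have "((a+b-c)*(b+c-a)*(c+a-b)) / (2*a*b*c) \<ge> 0" using assms by simp
  then show ?thesis using e by linarith
qed

lemma inner_sq: "inner (x::complex) y = (norm x ^ 2 + norm y ^ 2 - norm (x - y) ^ 2) / 2"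
  by (simp add: norm_minus_cancel power2_norm_eq_inner inner_diff_left inner_diff_right inner_commute)

lemma tri:
  fixes A B C :: complex
  assumes "A \<noteq> B" "B \<noteq> C" "A \<noteq> C"
  shows "cos (ang B A C) + cos (ang A B C) + cos (ang A C B) \<ge> 1"
proof -
  define a where "a = norm (B - C)"
  define b where "b = norm (C - A)"
  define c where "c = norm (A - B)"
  have pos: "a > 0" "b > 0" "c > 0" using assms by (auto simp: a_def b_def c_def)
  have nc: "norm (B - A) = c" "norm (C - B) = a" "norm (A - C) = b" "norm (C - A) = b" "norm (A - B) = c" "norm (B - C) = a"
    by (simp_all add: a_def b_def c_def norm_minus_commute)
  have t1: "a \<le> b + c" unfolding a_def b_def c_def
    using norm_triangle_ineq[of "B - A" "A - C"] by (simp add: norm_minus_commute)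
  have t2: "b \<le> a + c" unfolding a_def b_def c_def
    using norm_triangle_ineq[of "C - B" "B - A"] by (simp add: norm_minus_commute)
  have t3: "c \<le> a + b" unfolding a_def b_def c_def
    using norm_triangle_ineq[of "A - C" "C - B"] by (simp add: norm_minus_commute)
  have i1: "inner (B - A) (C - A) = (c^2 + b^2 - a^2) / 2"
    using inner_sq[of "B - A" "C - A"] by (simp add: a_def b_def c_def norm_minus_commute)
  have i2: "inner (A - B) (C - B) = (c^2 + a^2 - b^2) / 2"
    using inner_sq[of "A - B" "C - B"] by (simp add: a_def b_def c_def norm_minus_commute)
  have i3: "inner (A - C) (B - C) = (b^2 + a^2 - c^2) / 2"
    using inner_sq[of "A - C" "B - C"] by (simp add: a_def b_def c_def norm_minus_commute)
  have c1: "cos (ang B A C) = (b^2 + c^2 - a^2) / (2*b*c)"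
    using assms by (simp add: cos_ang i1 nc) (simp add: field_simps)
  have c2: "cos (ang A B C) = (a^2 + c^2 - b^2) / (2*a*c)"
    using assms by (simp add: cos_ang i2 nc) (simp add: field_simps)
  have c3: "cos (ang A C B) = (a^2 + b^2 - c^2) / (2*a*b)"
    using assms by (simp add: cos_ang i3 nc) (simp add: field_simps)
  show ?thesis unfolding c1 c2 c3 using alg[OF pos t1 t2 t3] .
qed

lemma cross_distinct:
  assumes "cross2 (b - a) (c - b) \<noteq> 0"
  shows "a \<noteq> b" "b \<noteq> c" "a \<noteq> c"
proof -
  show "a \<noteq> b" using assms by (auto simp: cross2_def)
  show "b \<noteq> c" using assms by (auto simp: cross2_def)
  show "a \<noteq> c"
  proof
    assume "a = c"
    then have "cross2 (b - a) (c - b) = Im (cnj (b - a) * (- (b - a)))" by (simp add: cross2_def)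
    also have "\<dots> = 0" by (simp add: algebra_simps)
    finally show False using assms by simp
  qed
qed

lemma sucs: "Suc (Suc 0) = (2::nat)" "Suc (Suc (Suc 0)) = (3::nat)" by simp_all

lemma quad_nz:
  assumes "convex_quad z" "k < 4"
  shows "cross2 (z ((k+1) mod 4) - z (k mod 4)) (z ((k+2) mod 4) - z ((k+1) mod 4)) \<noteq> 0"
  using assms unfolding convex_quad_def by force

lemma T_ge:
  assumes "convex_quad z" "k < 4"
  shows "cos (qalpha z (k+1)) + cos (qgamma z (k+2)) + cos (qbeta z (k+3)) \<ge> 1"
proof -
  have "k = 0 \<or> k = 1 \<or> k = 2 \<or> k = 3" using assms(2) by arith
  then show ?thesis
  proof (elim disjE)
    assume "k = 0"
    have d: "cross2 (z 2 - z 1) (z 3 - z 2) \<noteq> 0" using quad_nz[OF assms(1), of 1] by (simp add: sucs)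
    show ?thesis using tri[OF cross_distinct[OF d]] \<open>k = 0\<close>
      by (simp add: qalpha_def qbeta_def qgamma_def sucs)
  next
    assume "k = 1"
    have d: "cross2 (z 3 - z 2) (z 0 - z 3) \<noteq> 0" using quad_nz[OF assms(1), of 2] by (simp add: sucs)
    show ?thesis using tri[OF cross_distinct[OF d]] \<open>k = 1\<close>
      by (simp add: qalpha_def qbeta_def qgamma_def sucs)
  next
    assume "k = 2"
    have d: "cross2 (z 0 - z 3) (z 1 - z 0) \<noteq> 0" using quad_nz[OF assms(1), of 3] by (simp add: sucs)
    show ?thesis using tri[OF cross_distinct[OF d]] \<open>k = 2\<close>
      by (simp add: qalpha_def qbeta_def qgamma_def sucs)
  next
    assume "k = 3"
    have d: "cross2 (z 1 - z 0) (z 2 - z 1) \<noteq> 0" using quad_nz[OF assms(1), of 0] by (simp add: sucs)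
    show ?thesis using tri[OF cross_distinct[OF d]] \<open>k = 3\<close>
      by (simp add: qalpha_def qbeta_def qgamma_def sucs)
  qed
qed

theorem corollary2:
  fixes z :: "nat \<Rightarrow> complex"
  assumes "convex_quad z"
  defines "S1 \<equiv> (\<Sum>j<4. cos (qalpha z j) + cos (qbeta z j) + cos (qgamma z j))"
      and "S2 \<equiv> (\<Sum>j<4. (cos (qalpha z j) + cos (qbeta z j) + cos (qgamma z j)) *
                         (cos (qalpha z (j+1)) + cos (qgamma z (j+2)) + cos (qbeta z (j+3))))"
  shows "8 * S1 + 2 * S2 \<ge> 40"
proof -
  define f where "f j = cos (qalpha z j) + cos (qbeta z j) + cos (qgamma z j)" for j
  define t where "t j = cos (qalpha z (j+1)) + cos (qgamma z (j+2)) + cos (qbeta z (j+3))" for j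
  have U: "{..<4::nat} = {0,1,2,3}" by auto
  have s1: "S1 = f 0 + f 1 + f 2 + f 3" unfolding S1_def f_def U by simp
  have s2: "S2 = f 0 * t 0 + f 1 * t 1 + f 2 * t 2 + f 3 * t 3" unfolding S2_def f_def t_def U by simp
  have ft: "f 0 + f 1 + f 2 + f 3 = t 0 + t 1 + t 2 + t 3"
    unfolding f_def t_def by (simp add: qalpha_def qbeta_def qgamma_def sucs)
  have tg: "t j \<ge> 1" if "j < 4" for j using T_ge[OF assms(1) that] unfolding t_def .
  have fg: "f j \<ge> -3" for j unfolding f_def
    using cos_ge_minus_one[of "qalpha z j"] cos_ge_minus_one[of "qbeta z j"] cos_ge_minus_one[of "qgamma z j"]
    by linarith
  have p: "(t j - 1) * (2 * f j + 10) \<ge> 0" if "j < 4" for j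
    using tg[OF that] fg[of j] by (intro mult_nonneg_nonneg) auto
  have e: "(t j - 1) * (2 * f j + 10) = 2 * (f j * t j) + 10 * t j - 2 * f j - 10" for j
    by (simp add: algebra_simps)
  show ?thesis using p[of 0] p[of 1] p[of 2] p[of 3] e[of 0] e[of 1] e[of 2] e[of 3] s1 s2 ft
    by simp
qed

end
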